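(* Assume the setting of the context. If Assumption (A5) holds, then for every compact interval $I\subset(0,\infty)$ and $r>0$, \[\lim_{\delta\to0}\limsup_{n\to\infty}\sup_{\substack{x,y\in B_{G^n}(\rho,\alpha(n)r):\\ d_{G^n}(x,y)\le\alpha(n)\delta}}\sup_{t\in I}\beta(n)\left|q^n_{\lfloor\gamma(n)t\rfloor}(x)-q^n_{\lfloor\gamma(n)t\rfloor}(y)\right|=0.\]
   Context: Let $(E,d_E)$ be a metric space and $F\subseteq E$ such that $F\cap\overline{B}_E(x,r)$ is compact for all $x\in E$, $r>0$ ($\overline{B}_E$, $B_E$ closed and open balls in $E$). Let $d_F:=d_E|_{F\times F}$, $\rho\in F$, and $\nu$ a Radon measure of full support on $(F,d_F)$ (extended to $E$ by $\nu(A):=\nu(A\cap F)$). For a locally finite connected graph $G$ with at least two vertices and distinguished vertex $\rho(G)$: $d_G$ is the shortest-path metric, $B_G(x,r)$ the open $d_G$-ball; $\mu^G$ a symmetric weight with $\mu^G_{xy}>0$ iff $\{x,y\}$ is an edge; $\mu^G_x:=\sum_y\mu^G_{xy}$; $\nu^G(A):=\sum_{x\in A}\mu^G_x$; $X^G$ the discrete time simple random walk with $P_G(x,y)=\mu^G_{xy}/\mu^G_x$, law $\mathbf{P}^G_x$; $p^G_m(x,y):=\mathbf{P}^G_x(X^G_m=y)/\nu^G(\{y\})$, $q^G_m(x,y):=\frac12(p^G_m+p^G_{m+1})(x,y)$, $q^G_m(x):=q^G_m(\rho(G),x)$; generator $\mathcal{L}_Gf(x)=\sum_yP_G(x,y)(f(y)-f(x))$;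 $(f,g)_G:=\sum_xf(x)g(x)\nu^G(\{x\})$; $\mathcal{E}_G(f,g):=-(\mathcal{L}_Gf,g)_G$ on $\mathcal{F}_G:=\{f:\mathcal{E}_G(f,f)<\infty\}$; resistance metric $R_G(x,y):=\sup\{|f(x)-f(y)|^2/\mathcal{E}_G(f,f):f\in\mathcal{F}_G,\mathcal{E}_G(f,f)>0\}$. $(G^n)_{n\ge1}$ are such graphs with $V(G^n)\subseteq E$, $\rho(G^n)=\rho$; $\nu^n:=\nu^{G^n}$, $q^n:=q^{G^n}$. $(\alpha(n)),(\beta(n)),(\gamma(n))$ are non-negative sequences diverging to $\infty$. Assumption (A5): (i) there is $c>0$ with $d_{G^n}(x,y)\ge c\alpha(n)d_E(x,y)$ for all $x,y\in V(G^n)$, $n\ge1$, and a non-negative $\tilde\alpha(n)=o(\alpha(n))$ such that for each $r>0$ there are $c'<\infty$, $n_0$ with $d_{G^n}(x,y)\le c'\alpha(n)d_E(x,y)+\tilde\alpha(n)$ for all $x,y\in V(G^n)\cap B_E(\rho,r)$, $n\ge n_0$; (ii) for every $x\in F$, $r>0$, $\lim_n\beta(n)^{-1}\nu^n(B_E(x,r))=\nu(B_E(x,r))$; (iii) for some $\kappa\in(0,\infty)$ there exist constants $c_1,c_2,c_3\in(0,\infty)$ and an integer $n_0$ such that $R_{G^n}(x,y)\le c_1d_{G^n}(x,y)^\kappa$ for all $x,y\in V(G^n)$, and $c_2\gamma(n)\le\alpha(n)^\kappa\beta(n)\le c_3\gamma(n)$, for all $n\ge n_0$. *)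

theory Defs
  imports "HOL-Analysis.Analysis" "HOL-Library.Landau_Symbols"
begin

definition gadj :: "'a set \<Rightarrow> ('a \<Rightarrow> 'a \<Rightarrow> real) \<Rightarrow> 'a \<Rightarrow> 'a \<Rightarrow> bool" where
  "gadj V mu x y \<longleftrightarrow> x \<in> V \<and> y \<in> V \<and> mu x y > 0"

definition wgraph :: "'a set \<Rightarrow> ('a \<Rightarrow> 'a \<Rightarrow> real) \<Rightarrow> 'a \<Rightarrow> bool" where
  "wgraph V mu rt \<longleftrightarrow>
     rt \<in> V \<and> (\<exists>x\<in>V. \<exists>y\<in>V. x \<noteq> y) \<and>
     (\<forall>x y. mu x y = mu y x) \<and> (\<forall>x y. mu x y \<ge> 0) \<and>
     (\<forall>x y. mu x y > 0 \<longrightarrow> x \<in> V \<and> y \<in> V \<and> x \<noteq> y) \<and>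
     (\<forall>x\<in>V. finite {y. gadj V mu x y}) \<and>
     (\<forall>x\<in>V. \<forall>y\<in>V. \<exists>k. (gadj V mu ^^ k) x y)"

definition gdist :: "'a set \<Rightarrow> ('a \<Rightarrow> 'a \<Rightarrow> real) \<Rightarrow> 'a \<Rightarrow> 'a \<Rightarrow> nat" where
  "gdist V mu x y = (LEAST k. (gadj V mu ^^ k) x y)"

definition gdeg :: "'a set \<Rightarrow> ('a \<Rightarrow> 'a \<Rightarrow> real) \<Rightarrow> 'a \<Rightarrow> real" where
  "gdeg V mu x = (\<Sum>y\<in>{y. gadj V mu x y}. mu x y)"

definition gmeasure :: "'a set \<Rightarrow> ('a \<Rightarrow> 'a \<Rightarrow> real) \<Rightarrow> 'a set \<Rightarrow> ennreal" where
  "gmeasure V mu A = (\<Sum>\<^sub>\<infinity>x\<in>A \<inter> V. ennreal (gdeg V mu x))"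

definition gtrans :: "'a set \<Rightarrow> ('a \<Rightarrow> 'a \<Rightarrow> real) \<Rightarrow> 'a \<Rightarrow> 'a \<Rightarrow> real" where
  "gtrans V mu x y = mu x y / gdeg V mu x"

primrec gstep :: "'a set \<Rightarrow> ('a \<Rightarrow> 'a \<Rightarrow> real) \<Rightarrow> nat \<Rightarrow> 'a \<Rightarrow> 'a \<Rightarrow> real" where
  "gstep V mu 0 x y = (if x = y then 1 else 0)"
| "gstep V mu (Suc m) x y = (\<Sum>z\<in>{z. gadj V mu x z}. gtrans V mu x z * gstep V mu m z y)"

definition gheat :: "'a set \<Rightarrow> ('a \<Rightarrow> 'a \<Rightarrow> real) \<Rightarrow> nat \<Rightarrow> 'a \<Rightarrow> 'a \<Rightarrow> real" where
  "gheat V mu m x y = gstep V mu m x y / gdeg V mu y"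

definition gq :: "'a set \<Rightarrow> ('a \<Rightarrow> 'a \<Rightarrow> real) \<Rightarrow> nat \<Rightarrow> 'a \<Rightarrow> 'a \<Rightarrow> real" where
  "gq V mu m x y = (gheat V mu m x y + gheat V mu (Suc m) x y) / 2"

definition genergy_dom :: "'a set \<Rightarrow> ('a \<Rightarrow> 'a \<Rightarrow> real) \<Rightarrow> ('a \<Rightarrow> real) set" where
  "genergy_dom V mu =
     {f. (\<lambda>(x,y). mu x y * (f x - f y)\<^sup>2) summable_on (V \<times> V)}"

definition genergy :: "'a set \<Rightarrow> ('a \<Rightarrow> 'a \<Rightarrow> real) \<Rightarrow> ('a \<Rightarrow> real) \<Rightarrow> real" where
  "genergy V mu f = (\<Sum>\<^sub>\<infinity>(x,y)\<in>V \<times> V. mu x y * (f x - f y)\<^sup>2) / 2"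

definition gresist :: "'a set \<Rightarrow> ('a \<Rightarrow> 'a \<Rightarrow> real) \<Rightarrow> 'a \<Rightarrow> 'a \<Rightarrow> ereal" where
  "gresist V mu x y =
     (SUP f\<in>{f \<in> genergy_dom V mu. genergy V mu f > 0}.
        ereal ((f x - f y)\<^sup>2 / genergy V mu f))"

definition radon_full_support_on :: "'a::metric_space set \<Rightarrow> 'a measure \<Rightarrow> bool" where
  "radon_full_support_on F nu \<longleftrightarrow>
     sets nu = sets borel \<and>
     (\<forall>A\<in>sets nu. emeasure nu A = emeasure nu (A \<inter> F)) \<and>
     (\<forall>K. compact K \<longrightarrow> emeasure nu K < \<infinity>) \<and>
     (\<forall>A\<in>sets nu. emeasure nu A = (SUP K\<in>{K. compact K \<and> K \<subseteq> A}. emeasure nu K)) \<and>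
     (\<forall>A\<in>sets nu. emeasure nu A = (INF U\<in>{U. open U \<and> A \<subseteq> U}. emeasure nu U)) \<and>
     (\<forall>x\<in>F. \<forall>r>0. emeasure nu (ball x r) > 0)"

end

theory Submission
  imports Defs
begin

locale wg =
  fixes V :: "'a set" and mu :: "'a \<Rightarrow> 'a \<Rightarrow> real" and rt :: 'a
  assumes wg: "wgraph V mu rt"
begin

abbreviation "R \<equiv> gadj V mu"
abbreviation "N x \<equiv> {y. gadj V mu x y}"
abbreviation "deg \<equiv> gdeg V mu"
abbreviation "Pt \<equiv> gtrans V mu"
abbreviation "st \<equiv> gstep V mu"

lemma rt_V: "rt \<in> V" using wg unfolding wgraph_def by auto
lemma mu_sym: "mu x y = mu y x" using wg unfolding wgraph_def by auto
lemma mu_nonneg: "mu x y \<ge> 0" using wg unfolding wgraph_def by auto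
lemma mu_pos_V: "mu x y > 0 \<Longrightarrow> x \<in> V \<and> y \<in> V" using wg unfolding wgraph_def by auto
lemma adj_iff: "R x y \<longleftrightarrow> mu x y > 0" using mu_pos_V unfolding gadj_def by auto
lemma adj_sym: "R x y \<Longrightarrow> R y x" using adj_iff mu_sym by metis
lemma mu_zero: "\<not> R x y \<Longrightarrow> mu x y = 0" using adj_iff mu_nonneg
  by (metis less_eq_real_def)
lemma adj_V: "R x y \<Longrightarrow> x \<in> V \<and> y \<in> V" unfolding gadj_def by auto
lemma fin_N: "finite (N x)"
proof (cases "x \<in> V")
  case True then show ?thesis using wg unfolding wgraph_def by auto
next
  case False then have "N x = {}" using adj_V by auto
  then show ?thesis by simp
qed
lemma conn: "x \<in> V \<Longrightarrow> y \<in> V \<Longrightarrow> \<exists>k. (R ^^ k) x y"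
  using wg unfolding wgraph_def by auto

lemma deg_sum: "finite S \<Longrightarrow> N x \<subseteq> S \<Longrightarrow> deg x = (\<Sum>y\<in>S. mu x y)"
  unfolding gdeg_def by (rule sum.mono_neutral_left) (auto intro: mu_zero)

lemma deg_nonneg: "deg x \<ge> 0" unfolding gdeg_def by (simp add: sum_nonneg mu_nonneg)

lemma deg_notV: "x \<notin> V \<Longrightarrow> deg x = 0"
proof -
  assume "x \<notin> V" then have "N x = {}" using adj_V by auto
  then show ?thesis unfolding gdeg_def by (metis sum.empty)
qed

lemma relpow_sym: "(R ^^ k) x y \<Longrightarrow> (R ^^ k) y x"
proof (induction k arbitrary: x y)
  case 0 then show ?case by simp
next
  case (Suc k)
  then obtain z where "(R ^^ k) x z" "R z y" by (auto elim: relpowp_Suc_E)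
  then show ?case using Suc.IH adj_sym by (metis relpowp_Suc_I2)
qed

lemma deg_pos: assumes "x \<in> V" shows "deg x > 0"
proof -
  obtain a b where ab: "a \<in> V" "b \<in> V" "a \<noteq> b" using wg unfolding wgraph_def by auto
  obtain y where y: "y \<in> V" "y \<noteq> x" using ab by metis
  obtain k where "(R ^^ k) x y" using conn[OF assms y(1)] by auto
  moreover have "k \<noteq> 0" using calculation y by (cases k) auto
  ultimately obtain z where "R x z" by (metis relpowp_E2)
  then have "mu x z > 0" "z \<in> N x" by (auto simp: adj_iff)
  then have "0 < (\<Sum>y\<in>N x. mu x y)"
    using fin_N by (metis (no_types, lifting) mu_nonneg sum_pos2)
  then show ?thesis unfolding gdeg_def .
qed

lemma deg_Pt: "deg x * Pt x y = mu x y"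
proof (cases "x \<in> V")
  case True then have "deg x > 0" using deg_pos by blast
  then show ?thesis unfolding gtrans_def by (simp)
next
  case False then have "mu x y = 0" using mu_pos_V mu_nonneg[of x y] by (metis less_eq_real_def)
  then show ?thesis using False deg_notV unfolding gtrans_def by simp
qed

lemma Pt_nonneg: "Pt x y \<ge> 0" unfolding gtrans_def by (simp add: mu_nonneg deg_nonneg)
lemma Pt_zero: "\<not> R x y \<Longrightarrow> Pt x y = 0" unfolding gtrans_def using mu_zero by simp

lemma Pt_sum1: assumes "x \<in> V" shows "(\<Sum>y\<in>N x. Pt x y) = 1"
proof -
  have "deg x > 0" using deg_pos assms by blast
  then have "(\<Sum>y\<in>N x. mu x y) \<noteq> 0" unfolding gdeg_def by simp
  then show ?thesis unfolding gtrans_def gdeg_def by (simp add: sum_divide_distrib[symmetric])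
qed

lemma st_Suc: "finite S \<Longrightarrow> N x \<subseteq> S \<Longrightarrow> st (Suc k) x y = (\<Sum>z\<in>S. Pt x z * st k z y)"
  by simp (rule sum.mono_neutral_left, auto simp: Pt_zero)

lemma st_nonneg: "st k x y \<ge> 0"
  by (induction k arbitrary: x) (auto intro!: sum_nonneg mult_nonneg_nonneg Pt_nonneg)

definition "Reach k x = {y. (R ^^ k) x y}"
definition "GB k x = {y. \<exists>i\<le>k. (R ^^ i) x y}"

lemma Reach_Suc: "Reach (Suc k) x = (\<Union>z\<in>Reach k x. N z)"
  unfolding Reach_def by (auto elim: relpowp_Suc_E intro: relpowp_Suc_I)

lemma fin_Reach: "finite (Reach k x)"
proof (induction k)
  case 0 then show ?case by (simp add: Reach_def)
next
  case (Suc k) then show ?case unfolding Reach_Suc using fin_N by auto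
qed

lemma GB_eq: "GB k x = (\<Union>i\<le>k. Reach i x)" unfolding GB_def Reach_def by auto
lemma fin_GB: "finite (GB k x)" unfolding GB_eq using fin_Reach by auto
lemma Reach_GB: "i \<le> k \<Longrightarrow> Reach i x \<subseteq> GB k x" unfolding GB_def Reach_def by auto
lemma GB_mono: "i \<le> k \<Longrightarrow> GB i x \<subseteq> GB k x" unfolding GB_def using le_trans by blast
lemma N_GB: "y \<in> GB k x \<Longrightarrow> N y \<subseteq> GB (Suc k) x"
  unfolding GB_def by (auto intro: relpowp_Suc_I)
lemma rt_GB: "x \<in> GB k x" unfolding GB_def by force
lemma N_Reach_left: "z \<in> N x \<Longrightarrow> Reach k z \<subseteq> Reach (Suc k) x"
  unfolding Reach_def using relpowp_Suc_I2[of R x z k] by blast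

lemma st_supp: "st k x y \<noteq> 0 \<Longrightarrow> y \<in> Reach k x"
proof (induction k arbitrary: x)
  case 0 then show ?case by (auto simp: Reach_def split: if_splits)
next
  case (Suc k)
  then obtain z where "z \<in> N x" "st k z y \<noteq> 0" by (auto elim: sum.not_neutral_contains_not_neutral)
  then show ?case using Suc.IH N_Reach_left by blast
qed

lemma st_supp': "st k y x \<noteq> 0 \<Longrightarrow> y \<in> Reach k x"
  using st_supp relpow_sym unfolding Reach_def by blast

lemma st_sum1: "x \<in> V \<Longrightarrow> finite S \<Longrightarrow> Reach k x \<subseteq> S \<Longrightarrow> (\<Sum>y\<in>S. st k x y) = 1"
proof (induction k arbitrary: x)
  case 0 then show ?case by (simp add: Reach_def)
next
  case (Suc k)
  have "(\<Sum>y\<in>S. st (Suc k) x y) = (\<Sum>z\<in>N x. Pt x z * (\<Sum>y\<in>S. st k z y))"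
    unfolding gstep.simps by (subst sum.swap) (simp add: sum_distrib_left)
  also have "\<dots> = (\<Sum>z\<in>N x. Pt x z)"
  proof (rule sum.cong)
    fix z assume z: "z \<in> N x"
    then have "z \<in> V" using adj_V by auto
    moreover have "Reach k z \<subseteq> S" using N_Reach_left[OF z] Suc.prems by auto
    ultimately show "Pt x z * (\<Sum>y\<in>S. st k z y) = Pt x z" using Suc.IH Suc.prems by simp
  qed simp
  also have "\<dots> = 1" using Pt_sum1 Suc.prems(1) by blast
  finally show ?case .
qed

lemma CK: "finite S \<Longrightarrow> Reach j x \<subseteq> S \<Longrightarrow> st (j + k) x z = (\<Sum>y\<in>S. st j x y * st k y z)"
proof (induction j arbitrary: x)
  case 0
  have "(\<Sum>y\<in>S. st 0 x y * st k y z) = (\<Sum>y\<in>S. if x = y then st k y z else 0)"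
    by (rule sum.cong) auto
  also have "\<dots> = st k x z" using 0 by (simp add: Reach_def)
  finally show ?case by (metis add_0)
next
  case (Suc j)
  have "st (Suc j + k) x z = (\<Sum>n\<in>N x. Pt x n * st (j + k) n z)" by simp
  also have "\<dots> = (\<Sum>n\<in>N x. Pt x n * (\<Sum>y\<in>S. st j n y * st k y z))"
  proof (rule sum.cong)
    fix n assume "n \<in> N x"
    then have "Reach j n \<subseteq> S" using N_Reach_left Suc.prems by blast
    then show "Pt x n * st (j + k) n z = Pt x n * (\<Sum>y\<in>S. st j n y * st k y z)"
      using Suc.IH Suc.prems by simp
  qed simp
  also have "\<dots> = (\<Sum>n\<in>N x. \<Sum>y\<in>S. Pt x n * st j n y * st k y z)"
    by (simp add: sum_distrib_left mult.assoc)
  also have "\<dots> = (\<Sum>y\<in>S. \<Sum>n\<in>N x. Pt x n * st j n y * st k y z)"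
    by (rule sum.swap)
  also have "\<dots> = (\<Sum>y\<in>S. st (Suc j) x y * st k y z)"
    by (simp add: sum_distrib_right)
  finally show ?case .
qed

lemma st_one: "st 1 x y = Pt x y"
proof -
  have "st 1 x y = (\<Sum>z\<in>N x. Pt x z * (if z = y then 1 else 0))" by simp
  also have "\<dots> = Pt x y"
    using fin_N by (simp add: if_distrib sum.delta cong: if_cong) (auto simp: Pt_zero)
  finally show ?thesis .
qed

lemma reversible: "deg x * st k x y = deg y * st k y x"
proof (induction k arbitrary: x y)
  case 0 then show ?case by simp
next
  case (Suc k)
  define S where "S = N x \<union> Reach k y"
  have S: "finite S" "N x \<subseteq> S" "Reach k y \<subseteq> S" unfolding S_def using fin_N fin_Reach by auto
  have "deg x * st (Suc k) x y = (\<Sum>z\<in>S. deg x * Pt x z * st k z y)"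
    using st_Suc[OF S(1,2)] by (simp add: sum_distrib_left mult.assoc)
  also have "\<dots> = (\<Sum>z\<in>S. Pt z x * (deg z * st k z y))"
  proof (rule sum.cong)
    fix z
    have "deg x * Pt x z = Pt z x * deg z" by (metis deg_Pt mu_sym mult.commute)
    then show "deg x * Pt x z * st k z y = Pt z x * (deg z * st k z y)" by (simp add: mult.assoc)
  qed simp
  also have "\<dots> = (\<Sum>z\<in>S. Pt z x * (deg y * st k y z))" using Suc.IH by simp
  also have "\<dots> = deg y * (\<Sum>z\<in>S. st k y z * st 1 z x)"
    unfolding st_one by (simp add: sum_distrib_left mult_ac)
  also have "\<dots> = deg y * st (Suc k) y x" using CK[OF S(1,3), of 1 x] by simp
  finally show ?case .
qed

end

context wg begin

abbreviation "f k y \<equiv> st k y rt"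

lemma L1: assumes "finite S" "Reach i rt \<subseteq> S"
  shows "(\<Sum>x\<in>S. deg x * f i x * f l x) = deg rt * st (i + l) rt rt"
proof -
  have "(\<Sum>x\<in>S. deg x * f i x * f l x) = (\<Sum>x\<in>S. deg rt * (st i rt x * st l x rt))"
    by (rule sum.cong) (auto simp: reversible[of _ i rt] mult.assoc)
  also have "\<dots> = deg rt * st (i + l) rt rt"
    using CK[OF assms, of l rt] by (simp add: sum_distrib_left)
  finally show ?thesis .
qed

lemma Reach_f: "f i x \<noteq> 0 \<Longrightarrow> x \<in> Reach i rt" using st_supp' by blast

lemma L2: assumes "i < K"
  shows "(\<Sum>x\<in>GB K rt. \<Sum>y\<in>GB K rt. mu x y * f i x * f l y) = deg rt * st (i + l + 1) rt rt"
proof -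
  let ?S = "GB K rt"
  have "(\<Sum>x\<in>?S. \<Sum>y\<in>?S. mu x y * f i x * f l y) = (\<Sum>x\<in>?S. deg x * f i x * f (Suc l) x)"
  proof (rule sum.cong)
    fix x assume x: "x \<in> ?S"
    show "(\<Sum>y\<in>?S. mu x y * f i x * f l y) = deg x * f i x * f (Suc l) x"
    proof (cases "f i x = 0")
      case True then show ?thesis by simp
    next
      case False
      then have "x \<in> GB i rt" using Reach_f Reach_GB by blast
      then have "N x \<subseteq> ?S" using N_GB GB_mono[of "Suc i" K rt] assms by fastforce
      then have "f (Suc l) x = (\<Sum>y\<in>?S. Pt x y * f l y)" using st_Suc fin_GB by blast
      then have "deg x * f i x * f (Suc l) x = (\<Sum>y\<in>?S. (deg x * Pt x y) * f i x * f l y)"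
        by (simp add: sum_distrib_left mult_ac)
      then show ?thesis by (simp add: deg_Pt)
    qed
  qed simp
  also have "\<dots> = deg rt * st (i + Suc l) rt rt"
    by (rule L1) (use fin_GB Reach_GB assms in auto)
  finally show ?thesis by simp
qed

lemma sq_expand:
  assumes fin: "finite S" and S0S: "S0 \<subseteq> S" and NS: "\<And>x. x \<in> S0 \<Longrightarrow> N x \<subseteq> S"
    and supp: "\<And>x. g x \<noteq> 0 \<Longrightarrow> x \<in> S0"
  shows "(\<Sum>x\<in>S. \<Sum>y\<in>S. mu x y * (g x - g y)\<^sup>2) =
           2 * ((\<Sum>x\<in>S. deg x * g x * g x) - (\<Sum>x\<in>S. \<Sum>y\<in>S. mu x y * g x * g y))"
    and "(\<Sum>x\<in>S. \<Sum>y\<in>S. mu x y * (g x + g y)\<^sup>2) =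
           2 * ((\<Sum>x\<in>S. deg x * g x * g x) + (\<Sum>x\<in>S. \<Sum>y\<in>S. mu x y * g x * g y))"
proof -
  have A: "(\<Sum>x\<in>S. \<Sum>y\<in>S. mu x y * (g x * g x)) = (\<Sum>x\<in>S. deg x * g x * g x)"
  proof (rule sum.cong)
    fix x assume "x \<in> S"
    show "(\<Sum>y\<in>S. mu x y * (g x * g x)) = deg x * g x * g x"
    proof (cases "g x = 0")
      case False
      then have "deg x = (\<Sum>y\<in>S. mu x y)" using deg_sum fin NS supp by blast
      then show ?thesis by (simp add: sum_distrib_right mult.assoc)
    qed simp
  qed simp
  have B: "(\<Sum>x\<in>S. \<Sum>y\<in>S. mu x y * (g y * g y)) = (\<Sum>x\<in>S. \<Sum>y\<in>S. mu x y * (g x * g x))"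
    by (subst sum.swap) (simp add: mu_sym)
  have "(\<Sum>x\<in>S. \<Sum>y\<in>S. mu x y * (g x - g y)\<^sup>2) =
        (\<Sum>x\<in>S. \<Sum>y\<in>S. mu x y * (g x * g x)) + (\<Sum>x\<in>S. \<Sum>y\<in>S. mu x y * (g y * g y))
         - 2 * (\<Sum>x\<in>S. \<Sum>y\<in>S. mu x y * g x * g y)"
    by (simp add: power2_eq_square algebra_simps sum.distrib sum_subtractf sum_distrib_left)
  then show "(\<Sum>x\<in>S. \<Sum>y\<in>S. mu x y * (g x - g y)\<^sup>2) =
           2 * ((\<Sum>x\<in>S. deg x * g x * g x) - (\<Sum>x\<in>S. \<Sum>y\<in>S. mu x y * g x * g y))"
    using A B by simp
  have "(\<Sum>x\<in>S. \<Sum>y\<in>S. mu x y * (g x + g y)\<^sup>2) =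
        (\<Sum>x\<in>S. \<Sum>y\<in>S. mu x y * (g x * g x)) + (\<Sum>x\<in>S. \<Sum>y\<in>S. mu x y * (g y * g y))
         + 2 * (\<Sum>x\<in>S. \<Sum>y\<in>S. mu x y * g x * g y)"
    by (simp add: power2_eq_square algebra_simps sum.distrib sum_distrib_left)
  then show "(\<Sum>x\<in>S. \<Sum>y\<in>S. mu x y * (g x + g y)\<^sup>2) =
           2 * ((\<Sum>x\<in>S. deg x * g x * g x) + (\<Sum>x\<in>S. \<Sum>y\<in>S. mu x y * g x * g y))"
    using A B by simp
qed

lemma energy_finite:
  assumes fin: "finite S" and S0S: "S0 \<subseteq> S" and NS: "\<And>x. x \<in> S0 \<Longrightarrow> N x \<subseteq> S"
    and supp: "\<And>x. g x \<noteq> 0 \<Longrightarrow> x \<in> S0"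
  shows "g \<in> genergy_dom V mu"
    and "genergy V mu g = (\<Sum>x\<in>S. \<Sum>y\<in>S. mu x y * (g x - g y)\<^sup>2) / 2"
proof -
  let ?h = "\<lambda>(x,y). mu x y * (g x - g y)\<^sup>2"
  have z1: "?h p = 0" if "p \<in> S \<times> S - V \<times> V" for p
    using that mu_zero adj_V by (cases p) auto
  have z2: "?h p = 0" if "p \<in> V \<times> V - S \<times> S" for p
  proof (cases p)
    case (Pair x y)
    show ?thesis
    proof (cases "R x y")
      case False then show ?thesis using Pair mu_zero by simp
    next
      case True
      have "g x = 0 \<and> g y = 0"
      proof (cases "x \<in> S")
        case False
        then have "g x = 0" using supp S0S by blast
        moreover have "g y = 0"
        proof (rule ccontr)
          assume "g y \<noteq> 0" then have "y \<in> S0" using supp by blast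
          then have "x \<in> S" using NS adj_sym[OF True] by blast
          then show False using False by blast
        qed
        ultimately show ?thesis by simp
      next
        case xS: True
        then have yS: "y \<notin> S" using that Pair by auto
        then have "g y = 0" using supp S0S by blast
        moreover have "g x = 0"
        proof (rule ccontr)
          assume "g x \<noteq> 0" then have "x \<in> S0" using supp by blast
          then have "y \<in> S" using NS True by blast
          then show False using yS by blast
        qed
        ultimately show ?thesis by simp
      qed
      then show ?thesis using Pair by simp
    qed
  qed
  have "(?h summable_on V \<times> V) = (?h summable_on S \<times> S)"
    by (rule summable_on_cong_neutral) (use z1 z2 in auto)
  then show "g \<in> genergy_dom V mu" unfolding genergy_dom_def
    using summable_on_finite fin by auto
  have "infsum ?h (V \<times> V) = infsum ?h (S \<times> S)"
    by (rule infsum_cong_neutral) (use z1 z2 in auto)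
  also have "\<dots> = sum ?h (S \<times> S)" using fin by (simp add: infsum_finite)
  also have "\<dots> = (\<Sum>x\<in>S. \<Sum>y\<in>S. mu x y * (g x - g y)\<^sup>2)"
    by (simp add: sum.cartesian_product)
  finally show "genergy V mu g = (\<Sum>x\<in>S. \<Sum>y\<in>S. mu x y * (g x - g y)\<^sup>2) / 2"
    unfolding genergy_def by simp
qed

end

lemma gen1: "(\<Sum>x\<in>S. w x * (a * u x + b * v x) * (a * u x + b * v x)) =
   a*a*(\<Sum>x\<in>S. w x * u x * u x) + 2*a*b*(\<Sum>x\<in>S. w x * u x * v x) + b*b*(\<Sum>x\<in>S. w x * v x * v x)"
  for w u v :: "'a \<Rightarrow> real"
proof -
  have "(\<Sum>x\<in>S. w x * (a * u x + b * v x) * (a * u x + b * v x)) =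
     (\<Sum>x\<in>S. a*a*(w x * u x * u x) + 2*a*b*(w x * u x * v x) + b*b*(w x * v x * v x))"
    by (rule sum.cong) (auto simp: algebra_simps)
  then show ?thesis by (simp add: sum.distrib sum_distrib_left)
qed

lemma gen2: "(\<Sum>x\<in>S. \<Sum>y\<in>S. m x y * (a * u x + b * v x) * (a * u y + b * v y)) =
   a*a*(\<Sum>x\<in>S. \<Sum>y\<in>S. m x y * u x * u y) + a*b*((\<Sum>x\<in>S. \<Sum>y\<in>S. m x y * u x * v y)
    + (\<Sum>x\<in>S. \<Sum>y\<in>S. m x y * v x * u y)) + b*b*(\<Sum>x\<in>S. \<Sum>y\<in>S. m x y * v x * v y)"
  for m :: "'a \<Rightarrow> 'a \<Rightarrow> real" and u v :: "'a \<Rightarrow> real"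
proof -
  have "(\<Sum>x\<in>S. \<Sum>y\<in>S. m x y * (a * u x + b * v x) * (a * u y + b * v y)) =
     (\<Sum>x\<in>S. \<Sum>y\<in>S. a*a*(m x y * u x * u y) + a*b*(m x y * u x * v y) + a*b*(m x y * v x * u y)
        + b*b*(m x y * v x * v y))"
    by (intro sum.cong) (auto simp: algebra_simps)
  then show ?thesis by (simp add: sum.distrib sum_distrib_left distrib_left)
qed

declare gstep.simps(2)[simp del]

context wg begin

abbreviation "s k \<equiv> st k rt rt"

lemma deg_rt: "deg rt > 0" using deg_pos rt_V by blast

lemma heat_eq: "st m rt y / deg y = f m y / deg rt"
proof (cases "y \<in> V")
  case True
  then have "deg y > 0" using deg_pos by blast
  then show ?thesis using reversible[of rt m y] deg_rt by (simp add: field_simps)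
next
  case False
  then have "deg y = 0" using deg_notV by blast
  moreover have "f m y = 0"
  proof (rule ccontr)
    assume "f m y \<noteq> 0"
    then have "(R ^^ m) rt y" using Reach_f unfolding Reach_def by blast
    then show False
    proof (cases m)
      case 0 then show False using \<open>(R ^^ m) rt y\<close> False rt_V by simp
    next
      case (Suc k)
      then obtain z where "R z y" using \<open>(R ^^ m) rt y\<close> by (auto elim: relpowp_Suc_E)
      then show False using adj_V False by blast
    qed
  qed
  ultimately show ?thesis by simp
qed

lemma q_eq: "gq V mu m rt y = (1/(2*deg rt)) * f m y + (1/(2*deg rt)) * f (Suc m) y"
  unfolding gq_def gheat_def heat_eq by (simp add: field_simps)

lemma q_rt: "gq V mu m rt rt = (s m + s (Suc m)) / (2 * deg rt)"
  unfolding gq_def gheat_def using deg_rt by (simp add: field_simps)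

lemma q_nonneg: "gq V mu m rt y \<ge> 0"
  unfolding gq_def gheat_def by (simp add: st_nonneg deg_nonneg)

lemma q_supp: "gq V mu m rt y \<noteq> 0 \<Longrightarrow> y \<in> GB (Suc m) rt"
proof -
  assume "gq V mu m rt y \<noteq> 0"
  then have "f m y \<noteq> 0 \<or> f (Suc m) y \<noteq> 0" unfolding q_eq by auto
  moreover have "Reach m rt \<subseteq> GB (Suc m) rt" "Reach (Suc m) rt \<subseteq> GB (Suc m) rt"
    using Reach_GB by auto
  ultimately show ?thesis using Reach_f by blast
qed

lemma A_val: "i \<le> K \<Longrightarrow> (\<Sum>x\<in>GB K rt. deg x * f i x * f l x) = deg rt * s (i + l)"
  by (rule L1) (use fin_GB Reach_GB in auto)

lemma L2': "i < K \<Longrightarrow> k = i + l + 1 \<Longrightarrow>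
   (\<Sum>x\<in>GB K rt. \<Sum>y\<in>GB K rt. mu x y * f i x * f l y) = deg rt * s k"
  using L2 by simp

lemma A_val': "i \<le> K \<Longrightarrow> k = i + l \<Longrightarrow> (\<Sum>x\<in>GB K rt. deg x * f i x * f l x) = deg rt * s k"
  using A_val by simp

lemma arith1: "(D::real) > 0 \<Longrightarrow>
  ((1/(2*D))*(1/(2*D))*(D*z0) + 2*(1/(2*D))*(1/(2*D))*(D*z1) + (1/(2*D))*(1/(2*D))*(D*z2)) -
  ((1/(2*D))*(1/(2*D))*(D*z1) + (1/(2*D))*(1/(2*D))*(D*z2 + D*z2) + (1/(2*D))*(1/(2*D))*(D*z3))
  = (z0 + z1 - z2 - z3) / (4*D)"
  by (simp add: field_simps)

lemma q_energy:
  shows "(\<lambda>y. gq V mu m rt y) \<in> genergy_dom V mu"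
    and "genergy V mu (\<lambda>y. gq V mu m rt y) =
           (s (2*m) + s (2*m+1) - s (2*m+2) - s (2*m+3)) / (4 * deg rt)"
proof -
  let ?g = "\<lambda>y. gq V mu m rt y"
  let ?T = "GB (Suc m) rt" and ?S = "GB (Suc (Suc m)) rt"
  have c: "finite ?S" "?T \<subseteq> ?S" "\<And>x. x \<in> ?T \<Longrightarrow> N x \<subseteq> ?S" "\<And>x. ?g x \<noteq> 0 \<Longrightarrow> x \<in> ?T"
    subgoal using fin_GB by blast
    subgoal by (rule GB_mono) simp
    subgoal by (rule N_GB)
    subgoal by (rule q_supp)
    done
  show "?g \<in> genergy_dom V mu" by (rule energy_finite(1)[OF c])
  let ?a = "1/(2*deg rt)"
  have A1: "(\<Sum>x\<in>?S. deg x * f m x * f m x) = deg rt * s (2*m)"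
    by (rule A_val') simp_all
  have A2: "(\<Sum>x\<in>?S. deg x * f m x * f (Suc m) x) = deg rt * s (2*m+1)"
    by (rule A_val') simp_all
  have A3: "(\<Sum>x\<in>?S. deg x * f (Suc m) x * f (Suc m) x) = deg rt * s (2*m+2)"
    by (rule A_val') simp_all
  have B1: "(\<Sum>x\<in>?S. \<Sum>y\<in>?S. mu x y * f m x * f m y) = deg rt * s (2*m+1)"
    by (rule L2') simp_all
  have B2: "(\<Sum>x\<in>?S. \<Sum>y\<in>?S. mu x y * f m x * f (Suc m) y) = deg rt * s (2*m+2)"
    by (rule L2') simp_all
  have B3: "(\<Sum>x\<in>?S. \<Sum>y\<in>?S. mu x y * f (Suc m) x * f m y) = deg rt * s (2*m+2)"
    by (rule L2') simp_all
  have B4: "(\<Sum>x\<in>?S. \<Sum>y\<in>?S. mu x y * f (Suc m) x * f (Suc m) y) = deg rt * s (2*m+3)"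
    by (rule L2') simp_all
  have G1: "(\<Sum>x\<in>?S. deg x * ?g x * ?g x) =
      ?a*?a*(deg rt * s (2*m)) + 2*?a*?a*(deg rt * s (2*m+1)) + ?a*?a*(deg rt * s (2*m+2))"
    unfolding q_eq gen1 A1 A2 A3 by simp
  have G2: "(\<Sum>x\<in>?S. \<Sum>y\<in>?S. mu x y * ?g x * ?g y) =
      ?a*?a*(deg rt * s (2*m+1)) + ?a*?a*((deg rt * s (2*m+2)) + (deg rt * s (2*m+2)))
       + ?a*?a*(deg rt * s (2*m+3))"
    unfolding q_eq gen2 B1 B2 B3 B4 by simp
  have "genergy V mu ?g = (\<Sum>x\<in>?S. deg x * ?g x * ?g x) - (\<Sum>x\<in>?S. \<Sum>y\<in>?S. mu x y * ?g x * ?g y)"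
    using energy_finite(2)[where g="?g", OF c] sq_expand(1)[where g="?g", OF c] by simp
  also have "\<dots> = (s (2*m) + s (2*m+1) - s (2*m+2) - s (2*m+3)) / (4 * deg rt)"
    unfolding G1 G2 by (rule arith1[OF deg_rt])
  finally show "genergy V mu ?g = (s (2*m) + s (2*m+1) - s (2*m+2) - s (2*m+3)) / (4 * deg rt)" .
qed

lemma d_mono: "s (2*m) + s (2*m+1) - 2 * s (2*m+2) - 2 * s (2*m+3) + s (2*m+4) + s (2*m+5) \<ge> 0"
proof -
  let ?g = "\<lambda>y. 1 * f m y + (-1) * f (m+2) y"
  let ?T = "GB (m+2) rt" and ?S = "GB (Suc (m+2)) rt"
  have c: "finite ?S" "?T \<subseteq> ?S" "\<And>x. x \<in> ?T \<Longrightarrow> N x \<subseteq> ?S" "\<And>x. ?g x \<noteq> 0 \<Longrightarrow> x \<in> ?T"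
    subgoal using fin_GB by blast
    subgoal by (rule GB_mono) simp
    subgoal by (rule N_GB)
    subgoal for x using Reach_f[of m x] Reach_f[of "m+2" x] Reach_GB[of m "m+2" rt] Reach_GB[of "m+2" "m+2" rt]
      by (cases "f m x = 0") auto
    done
  have A1: "(\<Sum>x\<in>?S. deg x * f m x * f m x) = deg rt * s (2*m)"
    by (rule A_val') simp_all
  have A2: "(\<Sum>x\<in>?S. deg x * f m x * f (m+2) x) = deg rt * s (2*m+2)"
    by (rule A_val') simp_all
  have A3: "(\<Sum>x\<in>?S. deg x * f (m+2) x * f (m+2) x) = deg rt * s (2*m+4)"
    by (rule A_val') simp_all
  have B1: "(\<Sum>x\<in>?S. \<Sum>y\<in>?S. mu x y * f m x * f m y) = deg rt * s (2*m+1)"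
    by (rule L2') simp_all
  have B2: "(\<Sum>x\<in>?S. \<Sum>y\<in>?S. mu x y * f m x * f (m+2) y) = deg rt * s (2*m+3)"
    by (rule L2') simp_all
  have B3: "(\<Sum>x\<in>?S. \<Sum>y\<in>?S. mu x y * f (m+2) x * f m y) = deg rt * s (2*m+3)"
    by (rule L2') simp_all
  have B4: "(\<Sum>x\<in>?S. \<Sum>y\<in>?S. mu x y * f (m+2) x * f (m+2) y) = deg rt * s (2*m+5)"
    by (rule L2') simp_all
  have G1: "(\<Sum>x\<in>?S. deg x * ?g x * ?g x) =
      1*1*(deg rt * s (2*m)) + 2*1*(-1)*(deg rt * s (2*m+2)) + (-1)*(-1)*(deg rt * s (2*m+4))"
    unfolding gen1 A1 A2 A3 by (rule refl)
  have G2: "(\<Sum>x\<in>?S. \<Sum>y\<in>?S. mu x y * ?g x * ?g y) =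
      1*1*(deg rt * s (2*m+1)) + 1*(-1)*((deg rt * s (2*m+3)) + (deg rt * s (2*m+3)))
       + (-1)*(-1)*(deg rt * s (2*m+5))"
    unfolding gen2 B1 B2 B3 B4 by (rule refl)
  have nn: "0 \<le> (\<Sum>x\<in>?S. \<Sum>y\<in>?S. mu x y * (?g x + ?g y)\<^sup>2)"
    by (intro sum_nonneg mult_nonneg_nonneg mu_nonneg) simp
  have eq: "(\<Sum>x\<in>?S. \<Sum>y\<in>?S. mu x y * (?g x + ?g y)\<^sup>2) = 
     2 * ((\<Sum>x\<in>?S. deg x * ?g x * ?g x) + (\<Sum>x\<in>?S. \<Sum>y\<in>?S. mu x y * ?g x * ?g y))"
    by (rule sq_expand(2)[where g="?g", OF c])
  have "0 \<le> 2 * ((\<Sum>x\<in>?S. deg x * ?g x * ?g x) + (\<Sum>x\<in>?S. \<Sum>y\<in>?S. mu x y * ?g x * ?g y))"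
    using nn eq by linarith
  then have "0 \<le> deg rt * (s (2*m) + s (2*m+1) - 2 * s (2*m+2) - 2 * s (2*m+3) + s (2*m+4) + s (2*m+5))"
    unfolding G1 G2 by (simp add: algebra_simps)
  then show ?thesis using deg_rt by (simp add: zero_le_mult_iff)
qed

end

lemma quad_bound:
  fixes x q A C :: real
  assumes "x \<ge> 0" "0 \<le> q" "q \<le> A" "(x - q)\<^sup>2 \<le> C * x" "C \<ge> 0"
  shows "x \<le> 2 * A + 4 * C"
proof (cases "x \<le> 2 * A")
  case True then show ?thesis using assms by simp
next
  case False
  then have h: "x / 2 \<le> x - q" "x > 0" using assms by auto
  then have "(x/2)\<^sup>2 \<le> (x - q)\<^sup>2" by (intro power_mono) auto
  then have "x * (x / 4) \<le> x * C" using assms(4) by (simp add: power2_eq_square mult.commute)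
  then have "x / 4 \<le> C" using h(2) by (simp add: mult_le_cancel_left_pos)
  then show ?thesis using assms by simp
qed

lemma arith2: "(D::real) > 0 \<Longrightarrow> (a0+a1-a2-a3)/(4*D) - (a2+a3-a4-a5)/(4*D) = (a0+a1-2*a2-2*a3+a4+a5)/(4*D)"
  by (simp add: field_simps)

context wg begin

abbreviation "En m \<equiv> genergy V mu (\<lambda>y. gq V mu m rt y)"
abbreviation "e k \<equiv> gq V mu k rt rt"

lemma E_eq: "En m = (e (2*m) - e (2*m+2)) / 2"
proof -
  have i1: "Suc (2*m) = 2*m+1" "Suc (2*m+2) = 2*m+3" by simp_all
  have h1: "e (2*m) = (s (2*m) + s (2*m+1)) / (2 * deg rt)" using q_rt[of "2*m", unfolded i1] .
  have h2: "e (2*m+2) = (s (2*m+2) + s (2*m+3)) / (2 * deg rt)" using q_rt[of "2*m+2", unfolded i1] .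
  show ?thesis unfolding q_energy(2) h1 h2 using deg_rt by (simp add: field_simps)
qed

lemma E_nonneg: "En m \<ge> 0"
  unfolding genergy_def by (intro divide_nonneg_pos infsum_nonneg) (auto simp: mu_nonneg)

lemma E_Suc: "En (Suc m) \<le> En m"
proof -
  have idx: "2*Suc m = 2*m+2" "2*m+2+1 = 2*m+3" "2*m+2+2 = 2*m+4" "2*m+2+3 = 2*m+5" by simp_all
  have h: "En (Suc m) = (s (2*m+2) + s (2*m+3) - s (2*m+4) - s (2*m+5)) / (4 * deg rt)"
    using q_energy(2)[of "Suc m"] unfolding idx .
  have "En m - En (Suc m) =
     (s (2*m) + s (2*m+1) - 2 * s (2*m+2) - 2 * s (2*m+3) + s (2*m+4) + s (2*m+5)) / (4 * deg rt)"
    unfolding h unfolding q_energy(2) by (rule arith2[OF deg_rt])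
  moreover have "\<dots> \<ge> 0" using d_mono deg_rt by simp
  ultimately show ?thesis by simp
qed

lemma E_anti: "k \<le> m \<Longrightarrow> En m \<le> En k"
proof (induction m rule: dec_induct)
  case base then show ?case by simp
next
  case (step m) then show ?case using E_Suc[of m] by simp
qed

lemma E_tele: "real d * En (j + d) \<le> (e (2*j) - e (2*(j+d))) / 2"
proof (induction d)
  case 0 then show ?case by simp
next
  case (Suc d)
  have "real (Suc d) * En (j + Suc d) = real d * En (j + Suc d) + En (j + Suc d)" by (simp add: algebra_simps)
  also have "\<dots> \<le> real d * En (j + d) + En (j + d)"
    using E_Suc[of "j+d"] by (intro add_mono mult_left_mono) auto
  also have "\<dots> \<le> (e (2*j) - e (2*(j+d))) / 2 + En (j + d)" using Suc.IH by simp
  also have "\<dots> = (e (2*j) - e (2*(j+Suc d))) / 2"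
  proof -
    have "2*(j+Suc d) = 2*(j+d)+2" by simp
    then show ?thesis using E_eq[of "j+d"] by (simp only:) (simp add: field_simps)
  qed
  finally show ?case .
qed

lemma E_bound: "j < m \<Longrightarrow> real (m - j) * En m \<le> e (2*j) / 2"
  using E_tele[of "m - j" j] q_nonneg[of "2*m" rt] by simp

lemma energy_zero_const:
  assumes "En m = 0" "x \<in> V" "y \<in> V"
  shows "gq V mu m rt x = gq V mu m rt y"
proof -
  let ?g = "\<lambda>y. gq V mu m rt y"
  let ?T = "GB (Suc m) rt" and ?S = "GB (Suc (Suc m)) rt"
  have c: "finite ?S" "?T \<subseteq> ?S" "\<And>x. x \<in> ?T \<Longrightarrow> N x \<subseteq> ?S" "\<And>x. ?g x \<noteq> 0 \<Longrightarrow> x \<in> ?T"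
    subgoal using fin_GB by blast
    subgoal by (rule GB_mono) simp
    subgoal by (rule N_GB)
    subgoal by (rule q_supp)
    done
  have "(\<Sum>a\<in>?S. \<Sum>b\<in>?S. mu a b * (?g a - ?g b)\<^sup>2) = 0"
    using energy_finite(2)[where g="?g", OF c] assms(1) by simp
  then have z: "\<forall>a\<in>?S. \<forall>b\<in>?S. mu a b * (?g a - ?g b)\<^sup>2 = 0"
    using c(1) by (simp add: sum_nonneg_eq_0_iff sum_nonneg mu_nonneg)
  have adj: "?g a = ?g b" if "R a b" for a b
  proof (cases "a \<in> ?S \<and> b \<in> ?S")
    case True
    then have "mu a b * (?g a - ?g b)\<^sup>2 = 0" using z by blast
    moreover have "mu a b > 0" using that adj_iff by blast
    ultimately show ?thesis by simp
  next
    case False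
    then have "a \<notin> ?S \<or> b \<notin> ?S" by blast
    then have "?g a = 0 \<and> ?g b = 0"
    proof
      assume "a \<notin> ?S"
      moreover have "b \<notin> ?T" using c(3) adj_sym[OF that] calculation by blast
      ultimately show ?thesis using c by blast
    next
      assume "b \<notin> ?S"
      moreover have "a \<notin> ?T" using c(3) that calculation by blast
      ultimately show ?thesis using c by blast
    qed
    then show ?thesis by simp
  qed
  have path: "(R ^^ k) a b \<Longrightarrow> ?g a = ?g b" for k a b
  proof (induction k arbitrary: b)
    case 0 then show ?case by simp
  next
    case (Suc k)
    then obtain z where "(R ^^ k) a z" "R z b" by (auto elim: relpowp_Suc_E)
    then show ?case using Suc.IH adj by metis
  qed
  obtain k where "(R ^^ k) x y" using conn assms by blast
  then show ?thesis using path by blast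
qed

lemma resist_ineq:
  assumes "x \<in> V" "y \<in> V" "gresist V mu x y \<le> ereal B"
  shows "(gq V mu m rt x - gq V mu m rt y)\<^sup>2 \<le> B * En m"
proof (cases "En m = 0")
  case True then show ?thesis using energy_zero_const[OF True assms(1,2)] by simp
next
  case False
  then have pos: "En m > 0" using E_nonneg[of m] by simp
  let ?g = "\<lambda>y. gq V mu m rt y"
  have "ereal ((?g x - ?g y)\<^sup>2 / En m) \<le> gresist V mu x y"
    unfolding gresist_def by (rule SUP_upper) (use q_energy(1) pos in auto)
  then have "ereal ((?g x - ?g y)\<^sup>2 / En m) \<le> ereal B" using assms(3) by (rule order_trans)
  then have "(?g x - ?g y)\<^sup>2 / En m \<le> B" by simp
  then show ?thesis using pos by (simp add: pos_divide_le_eq)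
qed

lemma sum_mass: assumes "finite B" "B \<subseteq> V" shows "(\<Sum>y\<in>B. deg y * gq V mu k rt y) \<le> 1"
proof -
  have st1: "(\<Sum>y\<in>B. st k' rt y) \<le> 1" for k'
  proof -
    have "(\<Sum>y\<in>B. st k' rt y) \<le> (\<Sum>y\<in>B \<union> Reach k' rt. st k' rt y)"
      by (rule sum_mono2) (use assms fin_Reach st_nonneg in auto)
    also have "\<dots> = 1" by (rule st_sum1) (use rt_V assms fin_Reach in auto)
    finally show ?thesis .
  qed
  have "(\<Sum>y\<in>B. deg y * gq V mu k rt y) = (\<Sum>y\<in>B. (st k rt y + st (Suc k) rt y) / 2)"
  proof (rule sum.cong)
    fix y assume "y \<in> B"
    then have "deg y > 0" using deg_pos assms by blast
    then show "deg y * gq V mu k rt y = (st k rt y + st (Suc k) rt y) / 2"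
      unfolding gq_def gheat_def by (simp add: field_simps)
  qed simp
  also have "\<dots> = ((\<Sum>y\<in>B. st k rt y) + (\<Sum>y\<in>B. st (Suc k) rt y)) / 2"
    by (simp add: sum.distrib sum_divide_distrib[symmetric])
  also have "\<dots> \<le> 1" using st1[of k] st1[of "Suc k"] by simp
  finally show ?thesis .
qed

lemma ondiag:
  assumes B: "finite B" "B \<subseteq> V" and vol: "(\<Sum>y\<in>B. deg y) \<ge> Vol" "Vol > 0"
    and res: "\<And>y. y \<in> B \<Longrightarrow> gresist V mu rt y \<le> ereal Bd" and Bd: "Bd \<ge> 0" and j: "j \<ge> 1"
  shows "e (2*j) \<le> 2 / Vol + 2 * Bd / j"
proof -
  have "B \<noteq> {}" using vol by auto
  have "\<exists>y\<in>B. gq V mu (2*j) rt y \<le> 1 / Vol"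
  proof (rule ccontr)
    assume "\<not> ?thesis"
    then have lt: "\<And>y. y \<in> B \<Longrightarrow> 1 / Vol < gq V mu (2*j) rt y" by force
    have "(\<Sum>y\<in>B. deg y * (1 / Vol)) < (\<Sum>y\<in>B. deg y * gq V mu (2*j) rt y)"
    proof (rule sum_strict_mono)
      fix y assume "y \<in> B"
      then show "deg y * (1 / Vol) < deg y * gq V mu (2*j) rt y"
        using lt deg_pos B by (intro mult_strict_left_mono) auto
    qed (use B \<open>B \<noteq> {}\<close> in auto)
    also have "\<dots> \<le> 1" by (rule sum_mass[OF B])
    finally have "(\<Sum>y\<in>B. deg y) / Vol < 1" by (simp add: sum_divide_distrib[symmetric])
    then show False using vol by (simp add: divide_less_eq)
  qed
  then obtain y where y: "y \<in> B" "gq V mu (2*j) rt y \<le> 1 / Vol" by blast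
  have yV: "y \<in> V" using y B by blast
  have r: "(e (2*j) - gq V mu (2*j) rt y)\<^sup>2 \<le> Bd * En (2*j)"
    by (rule resist_ineq[OF rt_V yV res[OF y(1)]])
  have "real (2*j - j) * En (2*j) \<le> e (2*j) / 2" by (rule E_bound) (use j in simp)
  then have Eb: "En (2*j) \<le> e (2*j) / (2 * j)" using j by (simp add: field_simps)
  have "(e (2*j) - gq V mu (2*j) rt y)\<^sup>2 \<le> (Bd / (2*j)) * e (2*j)"
    using r mult_left_mono[OF Eb Bd] by (simp add: field_simps)
  then have "e (2*j) \<le> 2 * (1/Vol) + 4 * (Bd / (2*j))"
    by (intro quad_bound) (use q_nonneg y Bd j in auto)
  then show ?thesis by (simp add: field_simps)
qed

lemma main_graph:
  assumes xy: "x \<in> V" "y \<in> V" "gresist V mu x y \<le> ereal Bxy" "Bxy \<ge> 0"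
    and B: "finite B" "B \<subseteq> V" and vol: "(\<Sum>y\<in>B. deg y) \<ge> Vol" "Vol > 0"
    and res: "\<And>y. y \<in> B \<Longrightarrow> gresist V mu rt y \<le> ereal Bd" and Bd: "Bd \<ge> 0" and m: "m \<ge> 2"
  shows "(gq V mu m rt x - gq V mu m rt y)\<^sup>2 \<le>
           Bxy * ((2 / Vol + 2 * Bd / (m div 2)) / (2 * (m - m div 2)))"
proof -
  let ?j = "m div 2"
  have j1: "?j \<ge> 1" "?j < m" using m by auto
  have "real (m - ?j) * En m \<le> e (2*?j) / 2" by (rule E_bound[OF j1(2)])
  then have "En m \<le> e (2*?j) / (2 * (m - ?j))" using j1 by (simp add: field_simps)
  also have "\<dots> \<le> (2 / Vol + 2 * Bd / ?j) / (2 * (m - ?j))"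
    by (intro divide_right_mono ondiag[OF B vol res Bd j1(1)]) (use j1 in auto)
  finally have "En m \<le> (2 / Vol + 2 * Bd / ?j) / (2 * (m - ?j))" .
  then have "Bxy * En m \<le> Bxy * ((2 / Vol + 2 * Bd / ?j) / (2 * (m - ?j)))"
    using xy(4) by (rule mult_left_mono)
  then show ?thesis using resist_ineq[OF xy(1-3), of m] by linarith
qed

end

context wg begin

lemma key_bound:
  assumes res: "\<And>x y. x \<in> V \<Longrightarrow> y \<in> V \<Longrightarrow>
                  gresist V mu x y \<le> ereal (c1 * real (gdist V mu x y) powr ka)"
    and ka: "ka > 0" and c1: "c1 > 0"
    and B: "finite B" "B \<subseteq> V" and vol: "(\<Sum>y\<in>B. deg y) \<ge> Vol" "Vol > 0"
    and Dd: "\<And>y. y \<in> B \<Longrightarrow> real (gdist V mu rt y) \<le> Dd"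
    and xy: "x \<in> V" "y \<in> V" "real (gdist V mu x y) \<le> ad" and m: "m \<ge> 2"
  shows "(gq V mu m rt x - gq V mu m rt y)\<^sup>2 \<le>
           (c1 * ad powr ka) * ((2 / Vol + 2 * (c1 * Dd powr ka) / (m div 2)) / (2 * (m - m div 2)))"
proof -
  have "ereal (c1 * real (gdist V mu x y) powr ka) \<le> ereal (c1 * ad powr ka)"
    using xy(3) ka c1 by (simp add: mult_left_mono powr_mono2)
  with res[OF xy(1,2)] have r1: "gresist V mu x y \<le> ereal (c1 * ad powr ka)" by (rule order_trans)
  have r2: "gresist V mu rt z \<le> ereal (c1 * Dd powr ka)" if z: "z \<in> B" for z
  proof -
    have "ereal (c1 * real (gdist V mu rt z) powr ka) \<le> ereal (c1 * Dd powr ka)"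
      using Dd[OF z] ka c1 by (simp add: mult_left_mono powr_mono2)
    moreover have "z \<in> V" using z B by blast
    ultimately show ?thesis using res[OF rt_V] by (meson order_trans)
  qed
  show ?thesis by (rule main_graph[OF xy(1,2) r1 _ B vol r2 _ m]) (use c1 in simp_all)
qed

end

lemma asym_arith:
  fixes be nu0 a ga P Q W c1 c3 :: real and m :: nat
  assumes be: "be > 0" and nu0: "nu0 > 0" and a: "a > 0" and ga4: "ga * a \<ge> 4"
    and mge: "real m \<ge> ga * a - 1" and P: "P \<ge> 0" and bP: "be * P \<le> c3 * ga"
    and Q: "Q \<ge> 0" and W: "W \<ge> 0" and c1: "c1 > 0" and c3: "c3 > 0"
  shows "be\<^sup>2 * ((c1 * (P * Q)) * ((2 / (be * nu0 / 2) + 2 * (c1 * (W * P)) / (m div 2)) / (2 * (m - m div 2))))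
         \<le> c1 * Q * (8 * c3 / (nu0 * a) + 16 * c1 * W * c3\<^sup>2 / a\<^sup>2)"
proof -
  define g4 where "g4 = ga * a / 4"
  have g4: "g4 \<ge> 1" using ga4 unfolding g4_def by simp
  have ga: "ga > 0"
  proof (rule ccontr)
    assume "\<not> ga > 0"
    then have "ga * a \<le> 0" using a by (simp add: mult_nonpos_nonneg)
    then show False using ga4 by simp
  qed
  have jj: "real (m div 2) \<ge> g4"
  proof -
    have "real (m div 2) * 2 \<ge> real m - 1"
    proof -
      have "m div 2 * 2 + 1 \<ge> m" by linarith
      then have "real (m div 2 * 2 + 1) \<ge> real m" by linarith
      then show ?thesis by simp
    qed
    then show ?thesis using mge ga4 unfolding g4_def by linarith
  qed
  have mj: "real (m - m div 2) \<ge> g4"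
  proof -
    have "real (m - m div 2) * 2 \<ge> real m"
    proof -
      have "(m - m div 2) * 2 \<ge> m" by linarith
      then have "real ((m - m div 2) * 2) \<ge> real m" by linarith
      then show ?thesis by simp
    qed
    then show ?thesis using mge ga4 unfolding g4_def by linarith
  qed
  have jpos: "real (m div 2) > 0" using jj g4 by linarith
  have mpos: "real (m - m div 2) > 0" using mj g4 by linarith
  have t1: "2 * (c1 * (W * P)) / (m div 2) \<le> 2 * (c1 * (W * P)) / g4"
    using jj g4 c1 W P by (intro divide_left_mono) auto
  have num: "2 / (be * nu0 / 2) + 2 * (c1 * (W * P)) / real (m div 2) \<le> 4 / (be * nu0) + 2 * (c1 * (W * P)) / g4"
    using t1 by simp
  have num0: "0 \<le> 4 / (be * nu0) + 2 * (c1 * (W * P)) / g4" using be nu0 c1 W P g4 by simp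
  have "(2 / (be * nu0 / 2) + 2 * (c1 * (W * P)) / (m div 2)) / (2 * (m - m div 2))
      \<le> (4 / (be * nu0) + 2 * (c1 * (W * P)) / g4) / (2 * (m - m div 2))"
    using num mpos by (intro divide_right_mono) auto
  also have "\<dots> \<le> (4 / (be * nu0) + 2 * (c1 * (W * P)) / g4) / (2 * g4)"
    using num0 mj g4 by (intro divide_left_mono) auto
  finally have fr: "(2 / (be * nu0 / 2) + 2 * (c1 * (W * P)) / (m div 2)) / (2 * (m - m div 2))
      \<le> (4 / (be * nu0) + 2 * (c1 * (W * P)) / g4) / (2 * g4)" .
  have cPQ: "0 \<le> c1 * (P * Q)" using c1 P Q by simp
  have "be\<^sup>2 * ((c1 * (P * Q)) * ((2 / (be * nu0 / 2) + 2 * (c1 * (W * P)) / (m div 2)) / (2 * (m - m div 2))))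
      \<le> be\<^sup>2 * ((c1 * (P * Q)) * ((4 / (be * nu0) + 2 * (c1 * (W * P)) / g4) / (2 * g4)))"
    by (rule mult_left_mono[OF mult_left_mono[OF fr cPQ]]) simp
  also have "\<dots> = c1 * Q * (2 * (be * P) / (nu0 * g4) + c1 * W * (be * P)\<^sup>2 / g4\<^sup>2)"
    using be nu0 g4 by (simp add: divide_simps power2_eq_square) (simp add: algebra_simps)
  also have "\<dots> \<le> c1 * Q * (8 * c3 / (nu0 * a) + 16 * c1 * W * c3\<^sup>2 / a\<^sup>2)"
  proof (intro mult_left_mono add_mono)
    have bPg: "be * P / g4 \<le> 4 * c3 / a"
    proof -
      have "be * P / g4 \<le> c3 * ga / g4" using bP g4 by (intro divide_right_mono) auto
      also have "\<dots> = 4 * c3 / a" unfolding g4_def using ga a by (simp add: field_simps)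
      finally show ?thesis .
    qed
    have bPg0: "0 \<le> be * P / g4" using be P g4 by simp
    show "2 * (be * P) / (nu0 * g4) \<le> 8 * c3 / (nu0 * a)"
    proof -
      have "2 * (be * P) / (nu0 * g4) = (2 / nu0) * (be * P / g4)" by (simp add: field_simps)
      also have "\<dots> \<le> (2 / nu0) * (4 * c3 / a)" using bPg nu0 by (intro mult_left_mono) auto
      also have "\<dots> = 8 * c3 / (nu0 * a)" by (simp add: field_simps)
      finally show ?thesis .
    qed
    show "c1 * W * (be * P)\<^sup>2 / g4\<^sup>2 \<le> 16 * c1 * W * c3\<^sup>2 / a\<^sup>2"
    proof -
      have "c1 * W * (be * P)\<^sup>2 / g4\<^sup>2 = (c1 * W) * (be * P / g4)\<^sup>2" by (simp add: power_divide)
      also have "\<dots> \<le> (c1 * W) * (4 * c3 / a)\<^sup>2"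
        using bPg bPg0 c1 W by (intro mult_left_mono power_mono) auto
      also have "\<dots> = 16 * c1 * W * c3\<^sup>2 / a\<^sup>2" by (simp add: power_divide power_mult_distrib)
      finally show ?thesis .
    qed
    show "0 \<le> c1 * Q" using c1 Q by simp
  qed
  finally show ?thesis .
qed

theorem proposition4p6:
  fixes F :: "'a::metric_space set" and \<rho> :: 'a and \<nu> :: "'a measure"
    and V :: "nat \<Rightarrow> 'a set" and \<mu> :: "nat \<Rightarrow> 'a \<Rightarrow> 'a \<Rightarrow> real"
    and \<alpha> \<beta> \<gamma> :: "nat \<Rightarrow> real"
  assumes F_proper: "\<And>x r. r > 0 \<Longrightarrow> compact (F \<inter> cball x r)"
    and \<rho>_F: "\<rho> \<in> F"
    and \<nu>_radon: "radon_full_support_on F \<nu>"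
    and graphs: "\<And>n. n \<ge> 1 \<Longrightarrow> wgraph (V n) (\<mu> n) \<rho>"
    and \<alpha>_nonneg: "\<And>n. \<alpha> n \<ge> 0" and \<beta>_nonneg: "\<And>n. \<beta> n \<ge> 0" and \<gamma>_nonneg: "\<And>n. \<gamma> n \<ge> 0"
    and \<alpha>_div: "filterlim \<alpha> at_top sequentially"
    and \<beta>_div: "filterlim \<beta> at_top sequentially"
    and \<gamma>_div: "filterlim \<gamma> at_top sequentially"
    (* (A5)(i) *)
    and A5i_lower: "\<exists>c>0. \<forall>n\<ge>1. \<forall>x\<in>V n. \<forall>y\<in>V n.
                      real (gdist (V n) (\<mu> n) x y) \<ge> c * \<alpha> n * dist x y"
    and A5i_upper: "\<exists>\<alpha>'::nat \<Rightarrow> real. (\<forall>n. \<alpha>' n \<ge> 0) \<and> \<alpha>' \<in> o(\<alpha>) \<and>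
                      (\<forall>r>0. \<exists>c'. \<exists>n0. \<forall>n\<ge>n0. \<forall>x\<in>V n \<inter> ball \<rho> r. \<forall>y\<in>V n \<inter> ball \<rho> r.
                         real (gdist (V n) (\<mu> n) x y) \<le> c' * \<alpha> n * dist x y + \<alpha>' n)"
    (* (A5)(ii) *)
    and A5ii: "\<And>x r. x \<in> F \<Longrightarrow> r > 0 \<Longrightarrow>
                 (\<lambda>n. gmeasure (V n) (\<mu> n) (ball x r) / ennreal (\<beta> n))
                   \<longlonglongrightarrow> emeasure \<nu> (ball x r)"
    (* (A5)(iii) *)
    and A5iii: "\<exists>\<kappa>>0. \<exists>c1>0. \<exists>c2>0. \<exists>c3>0. \<exists>n0. \<forall>n\<ge>n0.
                  (\<forall>x\<in>V n. \<forall>y\<in>V n.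
                     gresist (V n) (\<mu> n) x y \<le> ereal (c1 * real (gdist (V n) (\<mu> n) x y) powr \<kappa>)) \<and>
                  c2 * \<gamma> n \<le> \<alpha> n powr \<kappa> * \<beta> n \<and> \<alpha> n powr \<kappa> * \<beta> n \<le> c3 * \<gamma> n"
    and I_pos: "0 < a" and I_le: "a \<le> b"
    and r_pos: "r > 0"
  shows "((\<lambda>\<delta>. limsup (\<lambda>n.
            SUP (x, y) \<in> {(x, y). x \<in> V n \<and> y \<in> V n \<and>
                        real (gdist (V n) (\<mu> n) \<rho> x) < \<alpha> n * r \<and>
                        real (gdist (V n) (\<mu> n) \<rho> y) < \<alpha> n * r \<and>
                        real (gdist (V n) (\<mu> n) x y) \<le> \<alpha> n * \<delta>}.
              SUP t \<in> {a..b}.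
                ereal (\<beta> n * \<bar>gq (V n) (\<mu> n) (nat \<lfloor>\<gamma> n * t\<rfloor>) \<rho> x
                              - gq (V n) (\<mu> n) (nat \<lfloor>\<gamma> n * t\<rfloor>) \<rho> y\<bar>)))
          \<longlongrightarrow> 0) (at_right 0)"
proof -
  obtain \<alpha>' where \<alpha>'0: "\<forall>n. \<alpha>' n \<ge> 0" and \<alpha>'o: "\<alpha>' \<in> o(\<alpha>)"
    and up_all: "\<forall>r>0. \<exists>c'. \<exists>n0. \<forall>n\<ge>n0. \<forall>x\<in>V n \<inter> ball \<rho> r. \<forall>y\<in>V n \<inter> ball \<rho> r.
                         real (gdist (V n) (\<mu> n) x y) \<le> c' * \<alpha> n * dist x y + \<alpha>' n"
    using A5i_upper by blast
  obtain cU n1 where up: "\<forall>n\<ge>n1. \<forall>x\<in>V n \<inter> ball \<rho> 1. \<forall>y\<in>V n \<inter> ball \<rho> 1.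
                         real (gdist (V n) (\<mu> n) x y) \<le> cU * \<alpha> n * dist x y + \<alpha>' n"
    using up_all by (meson zero_less_one)
  obtain \<kappa> c1 c3 n0 where \<kappa>: "\<kappa> > 0" and c1: "c1 > 0" and c3: "c3 > 0"
    and A3: "\<forall>n\<ge>n0. (\<forall>x\<in>V n. \<forall>y\<in>V n.
                     gresist (V n) (\<mu> n) x y \<le> ereal (c1 * real (gdist (V n) (\<mu> n) x y) powr \<kappa>)) \<and>
                  \<alpha> n powr \<kappa> * \<beta> n \<le> c3 * \<gamma> n"
    using A5iii by blast
  have sets_nu: "sets \<nu> = sets borel"
    using \<nu>_radon[unfolded radon_full_support_on_def] by (elim conjE) assumption
  have R2: "\<forall>A\<in>sets \<nu>. emeasure \<nu> A = emeasure \<nu> (A \<inter> F)"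
    using \<nu>_radon[unfolded radon_full_support_on_def] by (elim conjE) assumption
  have R3: "\<forall>K. compact K \<longrightarrow> emeasure \<nu> K < \<infinity>"
    using \<nu>_radon[unfolded radon_full_support_on_def] by (elim conjE) assumption
  have R4: "\<forall>x\<in>F. \<forall>r>0. emeasure \<nu> (ball x r) > 0"
    using \<nu>_radon[unfolded radon_full_support_on_def] by (elim conjE) assumption
  have ball_meas: "ball \<rho> 1 \<in> sets \<nu>" using sets_nu by simp
  have cpt: "compact (F \<inter> cball \<rho> 1)" using F_proper by simp
  have cpt_meas: "F \<inter> cball \<rho> 1 \<in> sets \<nu>"
    using sets_nu compact_imp_closed[OF cpt] by simp
  have "emeasure \<nu> (ball \<rho> 1) = emeasure \<nu> (ball \<rho> 1 \<inter> F)"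
    using R2 ball_meas by blast
  also have "\<dots> \<le> emeasure \<nu> (F \<inter> cball \<rho> 1)"
    by (rule emeasure_mono) (use cpt_meas in auto)
  also have "\<dots> < \<infinity>" using R3 cpt by blast
  finally have nu_fin: "emeasure \<nu> (ball \<rho> 1) < \<infinity>" .
  have nu_pos: "emeasure \<nu> (ball \<rho> 1) > 0"
    using R4 \<rho>_F by simp
  define \<nu>0 where "\<nu>0 = enn2real (emeasure \<nu> (ball \<rho> 1))"
  have nu_eq: "emeasure \<nu> (ball \<rho> 1) = ennreal \<nu>0"
    unfolding \<nu>0_def using nu_fin by (simp add: less_top)
  have \<nu>0: "\<nu>0 > 0" using nu_pos nu_eq by simp
  define W where "W = (\<bar>cU\<bar> + 1) powr \<kappa>"
  have W: "W \<ge> 0" unfolding W_def by simp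
  define K0 where "K0 = 8 * c3 / (\<nu>0 * a) + 16 * c1 * W * c3\<^sup>2 / a\<^sup>2"
  have K0: "K0 \<ge> 0" unfolding K0_def using c1 c3 \<nu>0 I_pos W by simp
  define good where "good n \<longleftrightarrow> n \<ge> 1 \<and> n \<ge> n0 \<and> n \<ge> n1 \<and> \<alpha>' n \<le> \<alpha> n \<and> \<gamma> n * a \<ge> 4
      \<and> \<alpha> n > 0 \<and> \<beta> n > 0 \<and> ennreal (\<nu>0 / 2) < gmeasure (V n) (\<mu> n) (ball \<rho> 1) / ennreal (\<beta> n)" for n
  have ev_good: "eventually good sequentially"
  proof -
    have e1: "eventually (\<lambda>n. n \<ge> 1 \<and> n \<ge> n0 \<and> n \<ge> n1) sequentially"
      by (intro eventually_conj eventually_ge_at_top)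
    have e2: "eventually (\<lambda>n. \<alpha>' n \<le> \<alpha> n) sequentially"
      using landau_o.smallD[OF \<alpha>'o zero_less_one] by eventually_elim (use \<alpha>'0 \<alpha>_nonneg in auto)
    have e3: "eventually (\<lambda>n. 4 / a \<le> \<gamma> n) sequentially"
      using \<gamma>_div unfolding filterlim_at_top by blast
    have e4: "eventually (\<lambda>n. 1 \<le> \<alpha> n) sequentially"
      using \<alpha>_div unfolding filterlim_at_top by blast
    have e5: "eventually (\<lambda>n. 1 \<le> \<beta> n) sequentially"
      using \<beta>_div unfolding filterlim_at_top by blast
    have e6: "eventually (\<lambda>n. ennreal (\<nu>0 / 2) < gmeasure (V n) (\<mu> n) (ball \<rho> 1) / ennreal (\<beta> n)) sequentially"
    proof (rule order_tendstoD(1)[OF A5ii[OF \<rho>_F zero_less_one]])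
      show "ennreal (\<nu>0 / 2) < emeasure \<nu> (ball \<rho> 1)" unfolding nu_eq using \<nu>0 by (simp add: ennreal_lessI)
    qed
    show ?thesis
    proof (rule eventually_mono[OF eventually_conj[OF e1 eventually_conj[OF e2 eventually_conj[OF e3
          eventually_conj[OF e4 eventually_conj[OF e5 e6]]]]]])
      fix n assume h: "(1 \<le> n \<and> n0 \<le> n \<and> n1 \<le> n) \<and> \<alpha>' n \<le> \<alpha> n \<and> 4 / a \<le> \<gamma> n \<and> 1 \<le> \<alpha> n \<and> 1 \<le> \<beta> n \<and>
          ennreal (\<nu>0 / 2) < gmeasure (V n) (\<mu> n) (ball \<rho> 1) / ennreal (\<beta> n)"
      then have "4 \<le> \<gamma> n * a" using I_pos by (simp add: divide_le_eq)
      then show "good n" using h unfolding good_def by auto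
    qed
  qed
  have bound: "\<beta> n * \<bar>gq (V n) (\<mu> n) (nat \<lfloor>\<gamma> n * t\<rfloor>) \<rho> x - gq (V n) (\<mu> n) (nat \<lfloor>\<gamma> n * t\<rfloor>) \<rho> y\<bar>
                 \<le> sqrt (c1 * \<delta> powr \<kappa> * K0)"
    if gd: "good n" and \<delta>: "\<delta> > 0" and xy: "x \<in> V n" "y \<in> V n" "real (gdist (V n) (\<mu> n) x y) \<le> \<alpha> n * \<delta>"
      and t: "t \<in> {a..b}" for n \<delta> x y t
  proof -
    have gn: "n \<ge> 1" "n \<ge> n0" "n \<ge> n1" "\<alpha>' n \<le> \<alpha> n" "\<gamma> n * a \<ge> 4" "\<alpha> n > 0" "\<beta> n > 0"
      and gm: "ennreal (\<nu>0 / 2) < gmeasure (V n) (\<mu> n) (ball \<rho> 1) / ennreal (\<beta> n)"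
      using gd unfolding good_def by auto
    interpret G: wg "V n" "\<mu> n" \<rho> by unfold_locales (rule graphs[OF gn(1)])
    have res: "\<And>x y. x \<in> V n \<Longrightarrow> y \<in> V n \<Longrightarrow>
        gresist (V n) (\<mu> n) x y \<le> ereal (c1 * real (gdist (V n) (\<mu> n) x y) powr \<kappa>)"
      and bP: "\<alpha> n powr \<kappa> * \<beta> n \<le> c3 * \<gamma> n" using A3 gn(2) by auto
    let ?Vol = "\<beta> n * \<nu>0 / 2"
    have "ennreal ?Vol < gmeasure (V n) (\<mu> n) (ball \<rho> 1)"
    proof (cases "gmeasure (V n) (\<mu> n) (ball \<rho> 1)")
      case (real r)
      then have "ennreal (\<nu>0 / 2) < ennreal (r / \<beta> n)" using gm gn(7) by (simp add: divide_ennreal)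
      then have "\<nu>0 / 2 < r / \<beta> n" using \<nu>0 by (simp add: ennreal_less_iff)
      then have "?Vol < r" using gn(7) by (simp add: field_simps)
      then show ?thesis using real \<nu>0 gn(7) by (simp add: ennreal_less_iff)
    next
      case top then show ?thesis by simp
    qed
    also have "gmeasure (V n) (\<mu> n) (ball \<rho> 1) =
        Sup ((sum (\<lambda>x. ennreal (G.deg x))) ` {B. finite B \<and> B \<subseteq> ball \<rho> 1 \<inter> V n})"
      unfolding gmeasure_def by (rule nonneg_infsum_complete) simp
    finally obtain B where B: "finite B" "B \<subseteq> ball \<rho> 1 \<inter> V n"
      and Bv: "ennreal ?Vol < (\<Sum>x\<in>B. ennreal (G.deg x))"
      by (auto simp: less_Sup_iff)
    have "(\<Sum>x\<in>B. ennreal (G.deg x)) = ennreal (\<Sum>x\<in>B. G.deg x)"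
      by (rule sum_ennreal) (rule G.deg_nonneg)
    then have vol: "?Vol \<le> (\<Sum>x\<in>B. G.deg x)" using Bv
      by (metis ennreal_less_iff less_eq_real_def linorder_not_le sum_nonneg G.deg_nonneg ennreal_leI)
    have volpos: "?Vol > 0" using gn(7) \<nu>0 by simp
    let ?Dd = "(\<bar>cU\<bar> + 1) * \<alpha> n"
    have Dd: "real (gdist (V n) (\<mu> n) \<rho> z) \<le> ?Dd" if z: "z \<in> B" for z
    proof -
      have zb: "z \<in> V n \<inter> ball \<rho> 1" using z B by auto
      have rb: "\<rho> \<in> V n \<inter> ball \<rho> 1" using G.rt_V by simp
      have "real (gdist (V n) (\<mu> n) \<rho> z) \<le> cU * \<alpha> n * dist \<rho> z + \<alpha>' n"
        using up gn(3) zb rb by blast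
      also have "cU * \<alpha> n * dist \<rho> z \<le> \<bar>cU\<bar> * \<alpha> n"
      proof -
        have "cU * \<alpha> n * dist \<rho> z \<le> \<bar>cU\<bar> * \<alpha> n * dist \<rho> z"
          using \<alpha>_nonneg[of n] by (intro mult_right_mono) (auto simp: abs_ge_self)
        also have "\<dots> \<le> \<bar>cU\<bar> * \<alpha> n * 1" using zb \<alpha>_nonneg[of n]
          by (intro mult_left_mono) (auto simp: dist_commute)
        finally show ?thesis by simp
      qed
      finally show ?thesis using gn(4) by (simp add: algebra_simps)
    qed
    define m where "m = nat \<lfloor>\<gamma> n * t\<rfloor>"
    have gt: "\<gamma> n * t \<ge> \<gamma> n * a" using t \<gamma>_nonneg[of n] by (intro mult_left_mono) auto
    have mge: "real m \<ge> \<gamma> n * a - 1"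
    proof -
      have "\<gamma> n * t \<ge> 0" using gt gn(5) by simp
      then have "real m = of_int \<lfloor>\<gamma> n * t\<rfloor>" unfolding m_def by simp
      then show ?thesis using gt by linarith
    qed
    have m2: "m \<ge> 2" using mge gn(5) by linarith
    have kb: "(gq (V n) (\<mu> n) m \<rho> x - gq (V n) (\<mu> n) m \<rho> y)\<^sup>2 \<le>
           (c1 * (\<alpha> n * \<delta>) powr \<kappa>) * ((2 / ?Vol + 2 * (c1 * ?Dd powr \<kappa>) / (m div 2)) / (2 * (m - m div 2)))"
      by (rule G.key_bound[OF res \<kappa> c1 B(1) _ vol volpos Dd xy m2]) (use B in auto)
    have p1: "(\<alpha> n * \<delta>) powr \<kappa> = \<alpha> n powr \<kappa> * \<delta> powr \<kappa>"
      using gn(6) \<delta> by (simp add: powr_mult)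
    have p2: "?Dd powr \<kappa> = W * \<alpha> n powr \<kappa>"
      unfolding W_def using gn(6) by (simp add: powr_mult)
    have "(\<beta> n)\<^sup>2 * (gq (V n) (\<mu> n) m \<rho> x - gq (V n) (\<mu> n) m \<rho> y)\<^sup>2 \<le>
        (\<beta> n)\<^sup>2 * ((c1 * (\<alpha> n powr \<kappa> * \<delta> powr \<kappa>)) * ((2 / (\<beta> n * \<nu>0 / 2)
           + 2 * (c1 * (W * \<alpha> n powr \<kappa>)) / (m div 2)) / (2 * (m - m div 2))))"
      using mult_left_mono[OF kb, of "(\<beta> n)\<^sup>2"] unfolding p1 p2 by simp
    also have "\<dots> \<le> c1 * \<delta> powr \<kappa> * (8 * c3 / (\<nu>0 * a) + 16 * c1 * W * c3\<^sup>2 / a\<^sup>2)"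
      by (rule asym_arith) (use gn \<nu>0 I_pos mge bP W c1 c3 in \<open>auto simp: mult.commute\<close>)
    finally have "(\<beta> n * \<bar>gq (V n) (\<mu> n) m \<rho> x - gq (V n) (\<mu> n) m \<rho> y\<bar>)\<^sup>2 \<le> c1 * \<delta> powr \<kappa> * K0"
      unfolding K0_def by (simp add: power_mult_distrib)
    then show ?thesis unfolding m_def by (rule real_le_rsqrt)
  qed
  let ?S = "\<lambda>n \<delta>. {(x, y). x \<in> V n \<and> y \<in> V n \<and>
                        real (gdist (V n) (\<mu> n) \<rho> x) < \<alpha> n * r \<and>
                        real (gdist (V n) (\<mu> n) \<rho> y) < \<alpha> n * r \<and>
                        real (gdist (V n) (\<mu> n) x y) \<le> \<alpha> n * \<delta>}"
  let ?I = "\<lambda>n x y. SUP t \<in> {a..b}.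
                ereal (\<beta> n * \<bar>gq (V n) (\<mu> n) (nat \<lfloor>\<gamma> n * t\<rfloor>) \<rho> x
                              - gq (V n) (\<mu> n) (nat \<lfloor>\<gamma> n * t\<rfloor>) \<rho> y\<bar>)"
  let ?L = "\<lambda>\<delta>. limsup (\<lambda>n. SUP (x, y) \<in> ?S n \<delta>. ?I n x y)"
  have upper: "(SUP (x, y) \<in> ?S n \<delta>. ?I n x y) \<le> ereal (sqrt (c1 * \<delta> powr \<kappa> * K0))"
    if "good n" "\<delta> > 0" for n \<delta>
  proof (rule SUP_least)
    fix p assume p: "p \<in> ?S n \<delta>"
    obtain x y where pxy: "p = (x, y)" by fastforce
    show "(case p of (x, y) \<Rightarrow> ?I n x y) \<le> ereal (sqrt (c1 * \<delta> powr \<kappa> * K0))"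
      unfolding pxy prod.case
    proof (rule SUP_least)
      fix t assume "t \<in> {a..b}"
      then show "ereal (\<beta> n * \<bar>gq (V n) (\<mu> n) (nat \<lfloor>\<gamma> n * t\<rfloor>) \<rho> x
                              - gq (V n) (\<mu> n) (nat \<lfloor>\<gamma> n * t\<rfloor>) \<rho> y\<bar>) \<le> ereal (sqrt (c1 * \<delta> powr \<kappa> * K0))"
        using bound[OF that] p pxy by auto
    qed
  qed
  have lower: "0 \<le> (SUP (x, y) \<in> ?S n \<delta>. ?I n x y)" if "good n" "\<delta> > 0" for n \<delta>
  proof -
    have gn: "n \<ge> 1" "\<alpha> n > 0" using that(1) unfolding good_def by auto
    interpret G: wg "V n" "\<mu> n" \<rho> by unfold_locales (rule graphs[OF gn(1)])
    have d0: "gdist (V n) (\<mu> n) \<rho> \<rho> = 0" unfolding gdist_def by (rule Least_eq_0) simp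
    have mem: "(\<rho>, \<rho>) \<in> ?S n \<delta>" using G.rt_V d0 gn(2) r_pos that(2) by simp
    have "0 \<le> ?I n \<rho> \<rho>"
      by (rule SUP_upper2[of a]) (use I_le in auto)
    also have "\<dots> \<le> (SUP (x, y) \<in> ?S n \<delta>. ?I n x y)"
      using SUP_upper[OF mem, of "\<lambda>(x, y). ?I n x y"] by simp
    finally show ?thesis .
  qed
  have Lb: "0 \<le> ?L \<delta> \<and> ?L \<delta> \<le> ereal (sqrt (c1 * \<delta> powr \<kappa> * K0))" if "\<delta> > 0" for \<delta>
  proof
    show "?L \<delta> \<le> ereal (sqrt (c1 * \<delta> powr \<kappa> * K0))"
      by (rule Limsup_bounded) (rule eventually_mono[OF ev_good], rule upper, auto simp: that)
    show "0 \<le> ?L \<delta>"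
      by (rule le_Limsup) (simp, rule eventually_mono[OF ev_good], rule lower, auto simp: that)
  qed
  have lim: "((\<lambda>\<delta>. ereal (sqrt (c1 * \<delta> powr \<kappa> * K0))) \<longlongrightarrow> 0) (at_right 0)"
  proof -
    have "((\<lambda>\<delta>::real. \<delta> powr \<kappa>) \<longlongrightarrow> 0) (at_right 0)"
      by (rule tendsto_zero_powrI) (auto intro: tendsto_ident_at eventually_mono[OF eventually_at_right_less] simp: \<kappa>)
    then have "((\<lambda>\<delta>. sqrt (c1 * \<delta> powr \<kappa> * K0)) \<longlongrightarrow> sqrt (c1 * 0 * K0)) (at_right 0)"
      by (intro tendsto_real_sqrt tendsto_mult tendsto_const)
    then have "((\<lambda>\<delta>. ereal (sqrt (c1 * \<delta> powr \<kappa> * K0))) \<longlongrightarrow> ereal 0) (at_right 0)"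
      by (intro tendsto_ereal) simp
    then show ?thesis by (simp add: zero_ereal_def)
  qed
  show ?thesis
  proof (rule tendsto_sandwich[OF _ _ tendsto_const lim])
    show "\<forall>\<^sub>F \<delta> in at_right 0. 0 \<le> ?L \<delta>"
      using eventually_at_right_less[of "0::real"] by eventually_elim (use Lb in blast)
    show "\<forall>\<^sub>F \<delta> in at_right 0. ?L \<delta> \<le> ereal (sqrt (c1 * \<delta> powr \<kappa> * K0))"
      using eventually_at_right_less[of "0::real"] by eventually_elim (use Lb in blast)
  qed
qed

end
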